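(* Let $\alpha_1,\alpha_2>0$, let $f\in\mathcal{A}$ with $f(z)\neq0$ for $0<|z|<1$, and let $$Y_f(z)=1+\alpha_1\,(A_2-A_1^2+A_1)+\alpha_2\,(A_3+2A_2+2A_1^3-2A_1^2-3A_1A_2),$$ where $A_1=zf'(z)/f(z)$, $A_2=z^2f''(z)/f(z)$, $A_3=z^3f'''(z)/f(z)$. Then $f\in\mathcal{S}^*_e$ if any one of the following holds: (i) $Y_f(z)\prec 2/(1+e^{-z})$ and $\alpha_1-\alpha_2\ge e\,r_0$, where $r_0\approx0.546302$ is the positive root of $r^2+2\cot(1)\,r-1=0$; (ii) $Y_f(z)\prec z+\sqrt{1+z^2}$ and $\alpha_1-\alpha_2\ge\sqrt2\,e$; (iii) $Y_f(z)\prec 1+\sin z$ and $\alpha_1-\alpha_2\ge e\sinh 1$; (iv) $Y_f(z)\prec 1+ze^z$ and $\alpha_1-\alpha_2\ge e^2$; (v) $Y_f(z)\prec 1+\sinh^{-1}z$ and $2(\alpha_1-\alpha_2)\ge\pi e$; (vi) $Y_f(z)\prec e^z$ and $\alpha_1-\alpha_2\ge e(e-1)$.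
   Context: $\mathbb{D}=\{z\in\mathbb{C}:|z|<1\}$. $\mathcal{A}$ is the class of analytic functions $f$ on $\mathbb{D}$ with $f(z)=z+a_2z^2+\cdots$. For $g,h$ analytic in $\mathbb{D}$, $g\prec h$ means there is an analytic $w:\mathbb{D}\to\mathbb{D}$ with $w(0)=0$ and $g=h\circ w$. $\mathcal{S}^*_e=\{f\in\mathcal{A}: zf'(z)/f(z)\prec e^z\}$. Square roots and $\sinh^{-1}$ denote the branches analytic in $\mathbb{D}$ with values $1$ and $0$ at $z=0$ respectively. *)

theory Defs
  imports "HOL-Analysis.Analysis"
begin

definition unit_disc :: "complex set" where
  "unit_disc = ball 0 1"

definition class_A :: "(complex \<Rightarrow> complex) set" where
  "class_A = {f. f holomorphic_on unit_disc \<and> f 0 = 0 \<and> deriv f 0 = 1}"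

definition subord :: "(complex \<Rightarrow> complex) \<Rightarrow> (complex \<Rightarrow> complex) \<Rightarrow> bool" where
  "subord g h \<longleftrightarrow> (\<exists>w. w holomorphic_on unit_disc \<and> w ` unit_disc \<subseteq> unit_disc \<and> w 0 = 0
       \<and> (\<forall>z\<in>unit_disc. g z = h (w z)))"

text \<open>The quotients z^k f^(k)(z)/f(z), with their removable values at z = 0
  (for f in class A, these limits are 1, 0, 0 for k = 1, 2, 3).\<close>
definition quotA :: "nat \<Rightarrow> (complex \<Rightarrow> complex) \<Rightarrow> complex \<Rightarrow> complex" where
  "quotA k f z = (if z = 0 then (if k = 1 then 1 else 0)
                  else z ^ k * (deriv ^^ k) f z / f z)"

definition starlike_exp :: "(complex \<Rightarrow> complex) set" where
  "starlike_exp = {f \<in> class_A. subord (quotA 1 f) exp}"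

definition Yf :: "real \<Rightarrow> real \<Rightarrow> (complex \<Rightarrow> complex) \<Rightarrow> complex \<Rightarrow> complex" where
  "Yf a1 a2 f z = (let A1 = quotA 1 f z; A2 = quotA 2 f z; A3 = quotA 3 f z in
     1 + of_real a1 * (A2 - A1^2 + A1)
       + of_real a2 * (A3 + 2*A2 + 2*A1^3 - 2*A1^2 - 3*A1*A2))"

text \<open>Positive root of r^2 + 2 cot(1) r - 1 = 0.\<close>
definition r0 :: real where
  "r0 = sqrt ((cot 1)^2 + 1) - cot 1"

text \<open>Branches analytic in the disc: principal square root (1+z^2 has positive real part),
  and asinh z = Ln (z + sqrt(1+z^2)) (its argument never lies on the closed negative axis).\<close>
definition casinh :: "complex \<Rightarrow> complex" where
  "casinh z = Ln (z + csqrt (1 + z^2))"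

end

theory Submission imports Defs "HOL-Complex_Analysis.Complex_Analysis" begin

lemma quot_holo:
  assumes fA: "f \<in> class_A" and nz: "\<forall>z. 0 < norm z \<and> norm z < 1 \<longrightarrow> f z \<noteq> 0"
  obtains P where "P holomorphic_on ball 0 1" "P 0 = 1"
    "\<And>z. z \<in> ball 0 1 \<Longrightarrow> quotA 1 f z = P z"
    "\<And>z. z \<in> ball 0 1 \<Longrightarrow> z \<noteq> 0 \<Longrightarrow> P z = z * deriv f z / f z"
proof -
  have holf: "f holomorphic_on ball 0 1" and f0: "f 0 = 0" and d0: "deriv f 0 = 1"
    using fA by (auto simp: class_A_def unit_disc_def)
  obtain F where holF: "F holomorphic_on ball 0 1" and fF: "\<And>z. norm z < 1 \<Longrightarrow> f z = z * F z"
    and dF: "deriv f 0 = F 0"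
    using Schwarz3[OF holf f0] by blast
  have Fnz: "F z \<noteq> 0" if "z \<in> ball 0 1" for z
  proof (cases "z = 0")
    case True then show ?thesis using dF d0 by simp
  next
    case False then show ?thesis using nz fF[of z] that by auto
  qed
  define P where "P z = 1 + z * deriv F z / F z" for z
  have holP: "P holomorphic_on ball 0 1"
    unfolding P_def using Fnz
    by (intro holomorphic_intros holomorphic_deriv holF) auto
  have dfz: "deriv f z = F z + z * deriv F z" if "z \<in> ball 0 1" for z
  proof -
    have dFz: "(F has_field_derivative deriv F z) (at z)"
      by (rule holomorphic_derivI[OF holF open_ball that])
    have "((\<lambda>z. z * F z) has_field_derivative (1 * F z + z * deriv F z)) (at z)"
      using dFz by (auto intro!: derivative_eq_intros)
    then have "(f has_field_derivative (1 * F z + z * deriv F z)) (at z)"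
      by (rule has_field_derivative_transform_within_open[OF _ open_ball that]) (use fF in auto)
    then show ?thesis by (simp add: DERIV_imp_deriv)
  qed
  have eqP: "P z = z * deriv f z / f z" if "z \<in> ball 0 1" "z \<noteq> 0" for z
    using that Fnz[OF that(1)] fF[of z] dfz[OF that(1)]
    by (auto simp: P_def field_simps)
  show ?thesis
  proof
    show "P 0 = 1" by (simp add: P_def)
    fix z :: complex assume z: "z \<in> ball 0 1"
    show "quotA 1 f z = P z"
      using eqP[OF z] by (cases "z = 0") (auto simp: quotA_def P_def)
  qed (use holP eqP in auto)
qed


lemma funpow_deriv2: "(deriv^^2) f = deriv (deriv f)" by (simp add: numeral_2_eq_2)
lemma funpow_deriv3: "(deriv^^3) f = deriv (deriv (deriv f))" by (simp add: numeral_3_eq_3)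

lemma Y_identity:
  fixes f P :: "complex \<Rightarrow> complex"
  assumes holf: "f holomorphic_on ball 0 1"
    and nz: "\<forall>z. 0 < norm z \<and> norm z < 1 \<longrightarrow> f z \<noteq> 0"
    and eqP: "\<And>z. z \<in> ball 0 1 \<Longrightarrow> z \<noteq> 0 \<Longrightarrow> P z = z * deriv f z / f z"
    and z: "z \<in> ball (0::complex) 1"
  shows "Yf a1 a2 f z = 1 + of_real a1 * z * deriv P z + of_real a2 * z^2 * deriv (deriv P) z"
proof (cases "z = 0")
  case True
  then show ?thesis by (simp add: Yf_def quotA_def)
next
  case False
  define S where "S = ball 0 1 - {0::complex}"
  have oS: "open S" by (simp add: S_def open_Diff)
  have zS: "z \<in> S" using z False by (simp add: S_def)
  define f1 where "f1 = deriv f"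
  define f2 where "f2 = deriv f1"
  define f3 where "f3 = deriv f2"
  have h1: "f1 holomorphic_on ball 0 1" unfolding f1_def by (intro holomorphic_deriv holf) auto
  have h2: "f2 holomorphic_on ball 0 1" unfolding f2_def by (intro holomorphic_deriv h1) auto
  have d0: "(f has_field_derivative f1 w) (at w)" if "w \<in> S" for w
    unfolding f1_def by (rule holomorphic_derivI[OF holf open_ball]) (use that in \<open>auto simp: S_def\<close>)
  have d1: "(f1 has_field_derivative f2 w) (at w)" if "w \<in> S" for w
    unfolding f2_def by (rule holomorphic_derivI[OF h1 open_ball]) (use that in \<open>auto simp: S_def\<close>)
  have d2: "(f2 has_field_derivative f3 w) (at w)" if "w \<in> S" for w
    unfolding f3_def by (rule holomorphic_derivI[OF h2 open_ball]) (use that in \<open>auto simp: S_def\<close>)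
  have fnz: "f w \<noteq> 0" if "w \<in> S" for w using nz that by (auto simp: S_def)
  define E1 where "E1 w = (f1 w + w * f2 w) / f w - w * f1 w ^ 2 / f w ^ 2" for w
  define E2 where "E2 w = (2 * f2 w + w * f3 w) / f w - (f1 w + w * f2 w) * f1 w / f w ^ 2
       - (f1 w ^ 2 / f w ^ 2 + 2 * w * f1 w * f2 w / f w ^ 2 - 2 * w * f1 w ^ 3 / f w ^ 3)" for w
  have dP: "(P has_field_derivative E1 w) (at w)" if w: "w \<in> S" for w
  proof -
    have "((\<lambda>w. w * f1 w / f w) has_field_derivative E1 w) (at w)"
      using d0[OF w] d1[OF w] fnz[OF w] f1_def
      apply (auto intro!: derivative_eq_intros)
      apply (simp add: E1_def field_simps power2_eq_square)
      done
    then show ?thesis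
      by (rule has_field_derivative_transform_within_open[OF _ oS w])
         (use eqP in \<open>auto simp: S_def f1_def\<close>)
  qed
  have dPeq: "deriv P w = E1 w" if "w \<in> S" for w using dP[OF that] by (simp add: DERIV_imp_deriv)
  have dE1: "(E1 has_field_derivative E2 w) (at w)" if w: "w \<in> S" for w
    unfolding E1_def
    using d0[OF w] d1[OF w] d2[OF w] fnz[OF w]
    apply (auto intro!: derivative_eq_intros)
    apply (simp add: E2_def field_simps)
    apply algebra
    done
  have "(deriv P has_field_derivative E2 z) (at z)"
    by (rule has_field_derivative_transform_within_open[OF dE1[OF zS] oS zS]) (use dPeq in auto)
  then have d2P: "deriv (deriv P) z = E2 z" by (simp add: DERIV_imp_deriv)
  have fz: "f z \<noteq> 0" using fnz zS by auto
  show ?thesis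
    using False fz
    by (simp add: Yf_def quotA_def funpow_deriv2 funpow_deriv3 dPeq[OF zS] d2P E1_def E2_def
        f1_def f2_def f3_def Let_def field_simps power2_eq_square power3_eq_cube)
qed


lemma growth_lemma:
  fixes q :: "complex \<Rightarrow> complex"
  assumes holq: "q holomorphic_on ball 0 1" and q0: "q 0 = 0" and c: "c > 0"
    and bnd: "\<And>w. w \<in> ball 0 1 \<Longrightarrow> norm (of_real c * q w + w * deriv q w) \<le> M * norm w"
    and z: "z \<in> ball 0 1"
  shows "norm (q z) \<le> M * norm z / (c + 1)"
proof -
  define \<phi> where "\<phi> t = of_real (t powr c) * q (of_real t * z)" for t :: real
  define \<psi> where "\<psi> t = M * norm z * t powr (c + 1) / (c + 1)" for t :: real
  have seg: "of_real t * z \<in> ball 0 1" if "0 \<le> t" "t \<le> 1" for t :: real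
    using z that mult_left_le_one_le[of "norm z" t] by (auto simp: norm_mult)
  have contq: "continuous_on (ball 0 1) q" using holq holomorphic_on_imp_continuous_on by blast
  have c1: "continuous_on {0..1} (\<lambda>t::real. q (of_real t * z))"
    by (rule continuous_on_compose2[OF contq]) (auto intro!: continuous_intros seg)
  have c2: "continuous_on {0..1::real} (\<lambda>t. t powr c)"
    by (rule continuous_on_powr') (use c in \<open>auto intro: continuous_intros\<close>)
  have cphi: "continuous_on {0..1} \<phi>"
    unfolding \<phi>_def by (intro continuous_intros c1 c2)
  have cpsi: "continuous_on {0..1} \<psi>"
    unfolding \<psi>_def using c
    by (intro continuous_intros continuous_on_powr') auto
  define D where "D t = of_real (t powr (c - 1)) * (of_real c * q (of_real t * z) + (of_real t * z) * deriv q (of_real t * z))" for t :: real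
  have dphi: "(\<phi> has_vector_derivative D t) (at t)" if t: "0 < t" "t < 1" for t
  proof -
    have tz: "of_real t * z \<in> ball 0 1" using seg t by auto
    have dq: "(q has_field_derivative deriv q (of_real t * z)) (at (of_real t * z))"
      by (rule holomorphic_derivI[OF holq open_ball tz])
    have dQ: "((\<lambda>w. q (w * z)) has_field_derivative z * deriv q (of_real t * z)) (at (of_real t))"
    proof -
      have dl: "((\<lambda>w. w * z) has_field_derivative z) (at (of_real t))"
        by (auto intro!: derivative_eq_intros)
      have dq2: "(q has_field_derivative deriv q (of_real t * z)) (at ((\<lambda>w. w * z) (of_real t)))"
        using dq by simp
      show ?thesis using DERIV_chain2[OF dq2 dl] by (simp add: mult.commute)
    qed
    have dQ': "((\<lambda>s::real. q (of_real s * z)) has_vector_derivative z * deriv q (of_real t * z)) (at t)"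
      using has_vector_derivative_real_field[OF dQ] by simp
    have dp: "((\<lambda>s. s powr c) has_real_derivative c * t powr (c - 1)) (at t)"
      using t by (auto intro!: derivative_eq_intros)
    have "(\<phi> has_vector_derivative (of_real (t powr c) * (z * deriv q (of_real t * z))
             + of_real (c * t powr (c - 1)) * q (of_real t * z))) (at t)"
      unfolding \<phi>_def
      by (intro has_vector_derivative_mult has_vector_derivative_of_real dp dQ')
    moreover have "of_real (t powr c) * (z * deriv q (of_real t * z))
             + of_real (c * t powr (c - 1)) * q (of_real t * z) = D t"
    proof -
      have "t powr c = t powr (c - 1 + 1)" by simp
      also have "\<dots> = t powr (c - 1) * t" using t by (simp only: powr_add) simp
      finally have "t powr c = t powr (c - 1) * t" .
      then show ?thesis by (simp add: D_def algebra_simps)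
    qed
    ultimately show ?thesis by simp
  qed
  have dpsi: "(\<psi> has_vector_derivative (M * norm z * t powr c)) (at t)" if t: "0 < t" "t < 1" for t
  proof -
    have "(\<psi> has_real_derivative (M * norm z * ((c + 1) * t powr (c + 1 - 1)) / (c + 1))) (at t)"
      unfolding \<psi>_def using t by (auto intro!: derivative_eq_intros)
    then show ?thesis using c by (simp add: has_real_derivative_iff_has_vector_derivative mult.assoc)
  qed
  have bD: "norm (D t) \<le> M * norm z * t powr c" if t: "0 < t" "t < 1" for t
  proof -
    have tz: "of_real t * z \<in> ball 0 1" using seg t by auto
    have "norm (D t) = t powr (c - 1) * norm (of_real c * q (of_real t * z) + (of_real t * z) * deriv q (of_real t * z))"
      by (simp add: D_def norm_mult)
    also have "\<dots> \<le> t powr (c - 1) * (M * (t * norm z))"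
      using bnd[OF tz] t by (intro mult_left_mono) (auto simp: norm_mult)
    also have "\<dots> = M * norm z * (t powr (c - 1) * t)" by simp
    also have "t powr (c - 1) * t = t powr c"
    proof -
      have "t powr c = t powr (c - 1 + 1)" by simp
      also have "\<dots> = t powr (c - 1) * t" using t by (simp only: powr_add) simp
      finally show ?thesis by simp
    qed
    finally show ?thesis .
  qed
  have "norm (\<phi> 1 - \<phi> 0) \<le> \<psi> 1 - \<psi> 0"
    by (rule differentiable_bound_general[OF _ cphi cpsi dphi dpsi bD]) auto
  then show ?thesis using c by (simp add: \<phi>_def \<psi>_def)
qed


lemma ray_bound:
  fixes P :: "complex \<Rightarrow> complex"
  assumes holP: "P holomorphic_on ball 0 1"
    and bnd: "\<And>w. w \<in> ball 0 1 \<Longrightarrow> norm (w * deriv P w) \<le> K * norm w"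
    and z: "z \<in> ball 0 1"
  shows "norm (P z - P 0) \<le> K * norm z"
proof -
  define \<phi> where "\<phi> t = P (of_real t * z)" for t :: real
  define \<psi> where "\<psi> t = K * norm z * t" for t :: real
  have seg: "of_real t * z \<in> ball 0 1" if "0 \<le> t" "t \<le> 1" for t :: real
    using z that mult_left_le_one_le[of "norm z" t] by (auto simp: norm_mult)
  have contP: "continuous_on (ball 0 1) P" using holP holomorphic_on_imp_continuous_on by blast
  have cphi: "continuous_on {0..1} \<phi>"
    unfolding \<phi>_def by (rule continuous_on_compose2[OF contP]) (auto intro!: continuous_intros seg)
  have cpsi: "continuous_on {0..1} \<psi>" unfolding \<psi>_def by (intro continuous_intros)
  have dphi: "(\<phi> has_vector_derivative (z * deriv P (of_real t * z))) (at t)" if t: "0 < t" "t < 1" for t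
  proof -
    have tz: "of_real t * z \<in> ball 0 1" using seg t by auto
    have dq: "(P has_field_derivative deriv P (of_real t * z)) (at ((\<lambda>w. w * z) (of_real t)))"
      using holomorphic_derivI[OF holP open_ball tz] by simp
    have dl: "((\<lambda>w. w * z) has_field_derivative z) (at (of_real t))"
      by (auto intro!: derivative_eq_intros)
    have "((\<lambda>w. P (w * z)) has_field_derivative z * deriv P (of_real t * z)) (at (of_real t))"
      using DERIV_chain2[OF dq dl] by (simp add: mult.commute)
    then show ?thesis unfolding \<phi>_def using has_vector_derivative_real_field by blast
  qed
  have dpsi: "(\<psi> has_vector_derivative (K * norm z)) (at t)" for t
    unfolding \<psi>_def has_real_derivative_iff_has_vector_derivative[symmetric]
    by (auto intro!: derivative_eq_intros)
  have bD: "norm (z * deriv P (of_real t * z)) \<le> K * norm z" if t: "0 < t" "t < 1" for t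
  proof -
    have tz: "of_real t * z \<in> ball 0 1" using seg t by auto
    have "t * norm (z * deriv P (of_real t * z)) = norm (of_real t * z * deriv P (of_real t * z))"
      using t by (simp add: norm_mult)
    also have "\<dots> \<le> K * norm (of_real t * z)" using bnd[OF tz] by simp
    also have "\<dots> = t * (K * norm z)" using t by (simp add: norm_mult)
    finally show ?thesis using t by simp
  qed
  have "norm (\<phi> 1 - \<phi> 0) \<le> \<psi> 1 - \<psi> 0"
    by (rule differentiable_bound_general[OF _ cphi cpsi dphi dpsi bD]) auto
  then show ?thesis by (simp add: \<phi>_def \<psi>_def)
qed

lemma norm_Ln_le_log:
  fixes x :: complex
  assumes x: "norm x < 1"
  shows "norm (Ln (1 + x)) \<le> - ln (1 - norm x)"
proof -
  have sums: "(\<lambda>n. - ((-x)^n) / of_nat n) sums Ln (1 + x)" by (rule Ln_series'[OF x])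
  have rs: "(\<lambda>n. - ((-(- norm x))^n) / of_nat n) sums ln (1 + - norm x)"
    by (rule ln_series') (use x in auto)
  have rs': "(\<lambda>n. norm (- ((-x)^n) / of_nat n)) sums (- ln (1 - norm x))"
  proof -
    have "(\<lambda>n. - (- ((-(- norm x))^n) / of_nat n)) sums (- ln (1 + - norm x))"
      using sums_minus[OF rs] .
    moreover have "(\<lambda>n. - (- ((-(- norm x))^n) / of_nat n)) = (\<lambda>n. norm (- ((-x)^n) / of_nat n))"
      by (auto simp: norm_divide norm_power)
    ultimately show ?thesis by simp
  qed
  have "norm (Ln (1 + x)) = norm (\<Sum>n. - ((-x)^n) / of_nat n)" using sums by (simp add: sums_iff)
  also have "\<dots> \<le> (\<Sum>n. norm (- ((-x)^n) / of_nat n))"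
    by (rule summable_norm) (use rs' in \<open>simp add: sums_iff\<close>)
  also have "\<dots> = - ln (1 - norm x)" using rs' by (simp add: sums_iff)
  finally show ?thesis .
qed

lemma core:
  fixes f h :: "complex \<Rightarrow> complex" and a1 a2 Rt :: real
  assumes fA: "f \<in> class_A" and nz: "\<forall>z. 0 < norm z \<and> norm z < 1 \<longrightarrow> f z \<noteq> 0"
    and a2: "0 < a2" and a12: "a2 < a1"
    and sub: "subord (Yf a1 a2 f) h"
    and hb: "\<And>\<zeta>. norm \<zeta> < 1 \<Longrightarrow> norm (h \<zeta> - 1) < Rt"
    and Rt: "0 < Rt" "Rt \<le> (1 - exp (-1)) * a1"
  shows "f \<in> starlike_exp"
proof -
  have a1: "0 < a1" using a2 a12 by linarith
  have holf: "f holomorphic_on ball 0 1" using fA by (auto simp: class_A_def unit_disc_def)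
  obtain P where holP: "P holomorphic_on ball 0 1" and P0: "P 0 = 1"
    and qP: "\<And>z. z \<in> ball 0 1 \<Longrightarrow> quotA 1 f z = P z"
    and eqP: "\<And>z. z \<in> ball 0 1 \<Longrightarrow> z \<noteq> 0 \<Longrightarrow> P z = z * deriv f z / f z"
    using quot_holo[OF fA nz] by blast
  have hol1: "deriv P holomorphic_on ball 0 1" by (intro holomorphic_deriv holP) auto
  have hol2: "deriv (deriv P) holomorphic_on ball 0 1" by (intro holomorphic_deriv hol1) auto
  define Yh where "Yh z = 1 + of_real a1 * z * deriv P z + of_real a2 * z^2 * deriv (deriv P) z" for z
  have YY: "Yf a1 a2 f z = Yh z" if "z \<in> ball 0 1" for z
    unfolding Yh_def by (rule Y_identity[OF holf nz eqP that])
  obtain w where holw: "w holomorphic_on ball 0 1" and wD: "w ` ball 0 1 \<subseteq> ball 0 1"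
    and w0: "w 0 = 0" and Yw: "\<And>z. z \<in> ball 0 1 \<Longrightarrow> Yf a1 a2 f z = h (w z)"
    using sub by (auto simp: subord_def unit_disc_def)
  define G where "G z = (Yh z - 1) / of_real Rt" for z
  have holG: "G holomorphic_on ball 0 1" unfolding G_def Yh_def
    by (intro holomorphic_intros hol1 hol2) (use Rt in auto)
  have G0: "G 0 = 0" by (simp add: G_def Yh_def)
  have Gb: "norm (G z) < 1" if "norm z < 1" for z
  proof -
    have zb: "z \<in> ball 0 1" using that by simp
    have "w z \<in> ball 0 1" using wD zb by blast
    then have "norm (w z) < 1" by simp
    then have "norm (h (w z) - 1) < Rt" by (rule hb)
    then have "norm (Yh z - 1) < Rt" using YY[OF zb] Yw[OF zb] by simp
    then show ?thesis using Rt by (simp add: G_def norm_divide)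
  qed
  have Ybnd: "norm (Yh z - 1) \<le> Rt * norm z" if "z \<in> ball 0 1" for z
  proof -
    have "norm (G z) \<le> norm z" using Schwarz_Lemma(1)[OF holG G0 Gb, of z] that by simp
    then show ?thesis using Rt by (simp add: G_def norm_divide field_simps)
  qed
  define q where "q z = z * deriv P z" for z
  have holq: "q holomorphic_on ball 0 1" unfolding q_def by (intro holomorphic_intros hol1)
  have dq: "deriv q z = deriv P z + z * deriv (deriv P) z" if "z \<in> ball 0 1" for z
  proof -
    have d1: "(deriv P has_field_derivative deriv (deriv P) z) (at z)"
      by (rule holomorphic_derivI[OF hol1 open_ball that])
    have "(q has_field_derivative (1 * deriv P z + z * deriv (deriv P) z)) (at z)"
      unfolding q_def using d1 by (auto intro!: derivative_eq_intros)
    then show ?thesis by (simp add: DERIV_imp_deriv)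
  qed
  define c where "c = (a1 - a2) / a2"
  have c: "c > 0" using a2 a12 by (simp add: c_def)
  have qb: "norm (of_real c * q z + z * deriv q z) \<le> (Rt / a2) * norm z" if "z \<in> ball 0 1" for z
  proof -
    have "of_real c * q z + z * deriv q z = (Yh z - 1) / of_real a2"
      using a2 dq[OF that] by (simp add: c_def q_def Yh_def field_simps power2_eq_square)
    then have "norm (of_real c * q z + z * deriv q z) = norm (Yh z - 1) / a2"
      using a2 by (simp add: norm_divide)
    also have "\<dots> \<le> Rt * norm z / a2" using Ybnd[OF that] a2 by (simp add: divide_right_mono)
    finally show ?thesis by simp
  qed
  have qbnd: "norm (z * deriv P z) \<le> (Rt / a1) * norm z" if "z \<in> ball 0 1" for z
  proof -
    have "norm (q z) \<le> (Rt / a2) * norm z / (c + 1)"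
      by (rule growth_lemma[OF holq _ c qb that]) (simp add: q_def)
    also have "c + 1 = a1 / a2" using a2 by (simp add: c_def field_simps)
    finally show ?thesis using a2 by (simp add: q_def field_simps)
  qed
  have Pb: "norm (P z - 1) \<le> (Rt / a1) * norm z" if "z \<in> ball 0 1" for z
    using ray_bound[OF holP qbnd that] P0 by simp
  have K: "Rt / a1 \<le> 1 - exp (-1)" using Rt a1 by (simp add: field_simps)
  have Pb2: "norm (P z - 1) < 1 - exp (-1)" if "z \<in> ball 0 1" for z
  proof (cases "z = 0")
    case True then show ?thesis using P0 by simp
  next
    case False
    have "(Rt / a1) * norm z < (Rt / a1) * 1" using that False Rt a1 by (intro mult_strict_left_mono) auto
    then show ?thesis using Pb[OF that] K by linarith
  qed
  have e1: "exp (-1::real) < 1" by simp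
  have e0: "0 < exp (-1::real)" by simp
  have PT: "P z \<in> ball 1 1" if "z \<in> ball 0 1" for z
  proof -
    have "norm (P z - 1) < 1" using Pb2[OF that] e0 by linarith
    then show ?thesis by (simp add: dist_norm norm_minus_commute)
  qed
  have T: "ball (1::complex) 1 \<inter> \<real>\<^sub>\<le>\<^sub>0 = {}"
  proof -
    have *: "norm (x - 1) \<ge> 1" if "x \<in> \<real>\<^sub>\<le>\<^sub>0" for x :: complex
    proof -
      have "Re x \<le> 0" using that by (simp add: complex_nonpos_Reals_iff)
      then have "1 \<le> \<bar>Re (x - 1)\<bar>" by simp
      also have "\<dots> \<le> norm (x - 1)" by (rule abs_Re_le_cmod)
      finally show ?thesis .
    qed
    show ?thesis
    proof (rule ccontr)
      assume "\<not> ?thesis"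
      then obtain x :: complex where x: "x \<in> ball 1 1" "x \<in> \<real>\<^sub>\<le>\<^sub>0" by blast
      then have "norm (x - 1) < 1" by (simp add: dist_norm norm_minus_commute)
      with *[OF x(2)] show False by linarith
    qed
  qed
  define W where "W z = Ln (P z)" for z
  have holW: "W holomorphic_on ball 0 1"
  proof -
    have "(Ln \<circ> P) holomorphic_on ball 0 1"
      by (rule holomorphic_on_compose_gen[OF holP holomorphic_on_Ln[OF T]]) (use PT in auto)
    then show ?thesis by (simp add: W_def[abs_def] o_def)
  qed
  have Wb: "norm (W z) < 1" if "z \<in> ball 0 1" for z
  proof -
    have x: "norm (P z - 1) < 1" using Pb2[OF that] e0 by linarith
    have "norm (W z) \<le> - ln (1 - norm (P z - 1))"
      using norm_Ln_le_log[OF x] by (simp add: W_def)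
    also have "\<dots> < 1"
    proof -
      have lt: "exp (-1) < 1 - norm (P z - 1)" using Pb2[OF that] by linarith
      have "ln (exp (-1)) < ln (1 - norm (P z - 1))"
        using lt e0 by (subst ln_less_cancel_iff) linarith+
      then show ?thesis by simp
    qed
    finally show ?thesis .
  qed
  have Pnz: "P z \<noteq> 0" if "z \<in> ball 0 1" for z using PT[OF that] T by auto
  show ?thesis
    unfolding starlike_exp_def subord_def unit_disc_def
  proof (intro CollectI conjI exI[of _ W] fA ballI)
    show "W holomorphic_on ball 0 1" by (rule holW)
    show "W ` ball 0 1 \<subseteq> ball 0 1" using Wb by auto
    show "W 0 = 0" by (simp add: W_def P0)
    fix z :: complex assume z: "z \<in> ball 0 1"
    show "quotA 1 f z = exp (W z)" using qP[OF z] Pnz[OF z] by (simp add: W_def)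
  qed
qed


lemma e_bounds: "2718/1000 < exp (1::real)" "exp (1::real) < 27183/10000"
proof -
  have "\<bar>exp 1 - 5837465777 / 2147483648\<bar> \<le> (1/4294967296::real)"
    using e_approx_32 by (simp add: inverse_eq_divide)
  then have h0: "exp 1 - 5837465777 / 2147483648 \<le> (1/4294967296::real) \<and>
          -(exp 1 - 5837465777 / 2147483648) \<le> (1/4294967296::real)"
    by (simp only: abs_le_iff)
  then have h: "exp 1 - 5837465777 / 2147483648 \<le> (1/4294967296::real)"
          "-(1/4294967296::real) \<le> exp 1 - 5837465777 / 2147483648"
    by linarith+
  show "2718/1000 < exp (1::real)" using h(2) by linarith
  show "exp (1::real) < 27183/10000" using h(1) by linarith
qed

lemma cos_gt_half: "\<bar>y\<bar> < 1 \<Longrightarrow> cos y > (1/2::real)"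
proof -
  assume y: "\<bar>y\<bar> < 1"
  have "\<bar>y\<bar> < pi/3" using y pi_gt3 by linarith
  then have "cos (pi/3) < cos \<bar>y\<bar>"
    by (subst cos_mono_less_eq) (use pi_gt3 in auto)
  then show ?thesis by (simp add: cos_60)
qed

lemma r0_ge: "r0 \<ge> 1/2"
proof -
  have sb: "\<bar>sin 1 - (\<Sum>m<5. sin_coeff m * 1 ^ m)\<bar> \<le> inverse (fact 5) * \<bar>1\<bar> ^ 5"
    by (rule Maclaurin_sin_bound)
  have S: "(\<Sum>m<5. sin_coeff m * (1::real) ^ m) = 5/6"
    by (simp add: sin_coeff_def lessThan_nat_numeral fact_numeral)
  have I: "inverse (fact 5) * \<bar>1::real\<bar> ^ 5 = 1/120" by (simp add: fact_numeral)
  have sb': "\<bar>sin 1 - 5/6\<bar> \<le> (1/120::real)" using sb unfolding S I .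
  then have s1: "sin 1 \<ge> (4/5::real)" by (simp only: abs_le_iff) linarith
  have c0: "cos 1 \<ge> (0::real)" by (rule cos_ge_zero) (use pi_ge_two in auto)
  have "cos 1 ^ 2 = 1 - sin (1::real) ^ 2" by (simp add: cos_squared_eq)
  moreover have "(4/5)^2 \<le> sin (1::real) ^ 2" using s1 by (intro power_mono) auto
  ultimately have "cos 1 ^ 2 \<le> (3/5::real)^2" by (simp add: power2_eq_square)
  then have c1: "cos 1 \<le> (3/5::real)" by (rule power2_le_imp_le) auto
  define c where "c = cot (1::real)"
  have cc: "c = cos 1 / sin 1" by (simp add: c_def cot_def)
  have c34: "c \<le> 3/4" using s1 c1 c0 by (simp add: cc divide_le_eq)
  have cpos: "c \<ge> 0" using s1 c0 by (simp add: cc)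
  have "c + 1/2 \<le> sqrt (c^2 + 1)"
    by (rule real_le_rsqrt) (use c34 cpos in \<open>simp add: power2_eq_square algebra_simps\<close>)
  then show ?thesis by (simp add: r0_def c_def)
qed

lemma bnd_i:
  fixes \<zeta> :: complex assumes z: "norm \<zeta> < 1"
  shows "norm (2 / (1 + exp (- \<zeta>)) - 1) < 4/5"
proof -
  define E where "E = exp (- \<zeta>)"
  define a where "a = exp (- Re \<zeta>)"
  define y where "y = Im \<zeta>"
  have xr: "\<bar>Re \<zeta>\<bar> < 1" using abs_Re_le_cmod[of \<zeta>] z by linarith
  have yr: "\<bar>y\<bar> < 1" using abs_Im_le_cmod[of \<zeta>] z by (simp add: y_def)
  have cy: "cos y > 1/2" by (rule cos_gt_half[OF yr])
  have ReE: "Re E = a * cos y" by (simp add: E_def a_def y_def Re_exp)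
  have ImE: "Im E = - (a * sin y)" by (simp add: E_def a_def y_def Im_exp)
  have a_up: "a < 3"
  proof -
    have "a < exp 1" unfolding a_def using xr by simp
    then show ?thesis using e_bounds by linarith
  qed
  have a_lo: "a > 3/10"
  proof -
    have "exp (-1) < a" unfolding a_def using xr by simp
    moreover have "exp (-1::real) = inverse (exp 1)" by (simp add: exp_minus)
    moreover have "inverse (exp (1::real)) > 3/10" using e_bounds by (simp add: field_simps)
    ultimately show ?thesis by linarith
  qed
  have sc: "sin y ^ 2 + cos y ^ 2 = 1" by simp
  have n1: "norm (1 - E) ^ 2 = 1 - 2 * a * cos y + a^2"
  proof -
    have "norm (1-E)^2 = (1 - a * cos y)^2 + (a * sin y)^2" using cmod_power2[of "1-E"] ReE ImE by simp
    also have "\<dots> = 1 - 2*a * cos y + a^2 * (sin y^2 + cos y^2)" by algebra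
    finally show ?thesis by simp
  qed
  have n2: "norm (1 + E) ^ 2 = 1 + 2 * a * cos y + a^2"
  proof -
    have "norm (1+E)^2 = (1 + a * cos y)^2 + (a * sin y)^2" using cmod_power2[of "1+E"] ReE ImE by simp
    also have "\<dots> = 1 + 2*a * cos y + a^2 * (sin y^2 + cos y^2)" by algebra
    finally show ?thesis by simp
  qed
  define X where "X = a * cos y"
  define A where "A = a * a"
  have p1: "(a - 3/10) * (a - 3) < 0" using a_up a_lo by (intro mult_pos_neg) auto
  have p1e: "(a - 3/10) * (a - 3) = a*a - 33/10*a + 9/10" by (simp add: algebra_simps) (simp add: field_simps)
  have p1': "10*A - 33*a + 9 < 0" using p1 p1e unfolding A_def by linarith
  have p2: "a * cos y > a * (1/2)" using a_lo cy by (intro mult_strict_left_mono) auto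
  then have p2': "a < 2*X" unfolding X_def by linarith
  have m1: "norm (1 - E) ^ 2 = 1 - 2 * X + A" using n1 by (simp add: X_def A_def power2_eq_square)
  have m2: "norm (1 + E) ^ 2 = 1 + 2 * X + A" using n2 by (simp add: X_def A_def power2_eq_square)
  have "25 - 50 * X + 25*A < 16 + 32 * X + 16*A" using p1' p2' a_lo by linarith
  then have ineq: "norm (1 - E) ^ 2 < (4/5 * norm (1 + E)) ^ 2"
    unfolding power_mult_distrib m1 m2 by (simp add: power2_eq_square field_simps)
  have pos: "norm (1 + E) > 0"
  proof -
    have "a * cos y > 0" using a_lo cy by (intro mult_pos_pos) auto
    then have "Re (1 + E) > 0" by (simp add: ReE)
    then show ?thesis using complex_Re_le_cmod[of "1 + E"] by linarith
  qed
  have "norm (1 - E) < 4/5 * norm (1 + E)"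
    by (rule power2_less_imp_less[OF ineq]) (use pos in auto)
  moreover have "2 / (1 + E) - 1 = (1 - E) / (1 + E)" using pos by (auto simp: field_simps)
  ultimately show ?thesis using pos by (simp add: E_def norm_divide divide_less_eq)
qed


lemma bnd_ii:
  fixes \<zeta> :: complex assumes z: "norm \<zeta> < 1"
  shows "norm (\<zeta> + csqrt (1 + \<zeta>^2) - 1) < 2"
proof -
  define s where "s = csqrt (1 + \<zeta>^2)"
  have ss: "s^2 = 1 + \<zeta>^2" by (simp add: s_def)
  have "(s - 1) * (s + 1) = \<zeta>^2" using ss by (simp add: algebra_simps power2_eq_square)
  then have e: "norm (s - 1) * norm (s + 1) = norm \<zeta> ^ 2" by (metis norm_mult norm_power)
  have "1 \<le> Re (s + 1)" using Re_csqrt[of "1 + \<zeta>^2"] by (simp add: s_def)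
  also have "\<dots> \<le> norm (s + 1)" by (rule complex_Re_le_cmod)
  finally have s1: "1 \<le> norm (s + 1)" .
  have "norm (s - 1) \<le> norm (s - 1) * norm (s + 1)"
    using s1 by (simp add: mult_le_cancel_left1)
  also have "\<dots> = norm \<zeta> ^ 2" by (rule e)
  also have "\<dots> < 1" using z by (simp add: power_less_one_iff)
  finally have "norm (s - 1) < 1" .
  then have "norm (\<zeta> + (s - 1)) < 2"
    using norm_triangle_ineq[of \<zeta> "s - 1"] z by linarith
  then show ?thesis by (simp add: s_def algebra_simps)
qed

lemma bnd_iii:
  fixes \<zeta> :: complex assumes z: "norm \<zeta> < 1"
  shows "norm (1 + sin \<zeta> - 1) < 8/5"
proof -
  define x where "x = Re \<zeta>"
  define y where "y = Im \<zeta>"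
  define u where "u = exp y"
  define v where "v = exp (-y)"
  have yr: "\<bar>y\<bar> < 1" using abs_Im_le_cmod[of \<zeta>] z by (simp add: y_def)
  have uv: "u * v = 1" by (simp add: u_def v_def flip: exp_add)
  have u1: "u < exp 1" "v < exp 1" using yr by (auto simp: u_def v_def)
  have u0: "u > 0" "v > 0" by (auto simp: u_def v_def)
  have key: "(exp 1 - u) * (exp 1 - v) > 0" using u1 by (intro mult_pos_pos) auto
  have ke: "(exp 1 - u) * (exp 1 - v) = exp 1 * exp 1 - exp 1 * (u + v) + 1"
    using uv by (simp add: algebra_simps)
  have ei: "exp 1 * exp (-1::real) = 1" by (simp flip: exp_add)
  have "exp 1 * (u + v) < exp 1 * (exp 1 + exp (-1))" using key ke ei by (simp add: algebra_simps)
  then have sumb: "u + v < exp 1 + exp (-1)" by simp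
  have "exp (-1::real) < 4/10"
  proof -
    have "exp (-1::real) = inverse (exp 1)" by (simp add: exp_minus)
    moreover have "inverse (exp (1::real)) < 4/10" using e_bounds by (simp add: field_simps)
    ultimately show ?thesis by simp
  qed
  then have sumb2: "u + v < 16/5" using sumb e_bounds by linarith
  have sq: "norm (sin \<zeta>) ^ 2 = sin x ^ 2 * ((u + v)/2)^2 + cos x ^ 2 * ((u - v)/2)^2"
    by (simp add: cmod_power2 Re_sin Im_sin x_def y_def u_def v_def power_mult_distrib power_divide)
  have uvsq: "((u - v)/2)^2 \<le> ((u + v)/2)^2"
  proof -
    have "\<bar>(u - v)/2\<bar> \<le> \<bar>(u + v)/2\<bar>" using u0 by (simp add: abs_le_iff)
    then show ?thesis by (simp only: abs_le_square_iff)
  qed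
  have "norm (sin \<zeta>) ^ 2 \<le> sin x ^ 2 * ((u + v)/2)^2 + cos x ^ 2 * ((u + v)/2)^2"
    unfolding sq by (intro add_left_mono mult_left_mono uvsq) auto
  also have "\<dots> = ((u + v)/2)^2" by (simp flip: distrib_right)
  also have "\<dots> < (8/5)^2" using sumb2 u0 by (intro power_strict_mono) auto
  finally have "norm (sin \<zeta>) ^ 2 < (8/5)^2" .
  then have "norm (sin \<zeta>) < 8/5" by (rule power2_less_imp_less) auto
  then show ?thesis by simp
qed

lemma bnd_iv:
  fixes \<zeta> :: complex assumes z: "norm \<zeta> < 1"
  shows "norm (1 + \<zeta> * exp \<zeta> - 1) < exp 1"
proof -
  have xr: "Re \<zeta> < 1" using complex_Re_le_cmod[of \<zeta>] z by linarith
  have "norm (\<zeta> * exp \<zeta>) = norm \<zeta> * exp (Re \<zeta>)" by (simp add: norm_mult)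
  also have "\<dots> < 1 * exp (Re \<zeta>)" using z by (intro mult_strict_right_mono) auto
  also have "\<dots> < exp 1" using xr by simp
  finally show ?thesis by simp
qed

lemma bnd_vi:
  fixes \<zeta> :: complex assumes z: "norm \<zeta> < 1"
  shows "norm (exp \<zeta> - 1) < 5/2"
proof -
  define a where "a = exp (Re \<zeta>)"
  define y where "y = Im \<zeta>"
  have xr: "Re \<zeta> < 1" using complex_Re_le_cmod[of \<zeta>] z by linarith
  have yr: "\<bar>y\<bar> < 1" using abs_Im_le_cmod[of \<zeta>] z by (simp add: y_def)
  have cy: "cos y > 1/2" by (rule cos_gt_half[OF yr])
  have a0: "a > 0" by (simp add: a_def)
  have a1: "a < 28/10"
  proof -
    have "a < exp 1" using xr by (simp add: a_def)
    then show ?thesis using e_bounds by linarith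
  qed
  have "norm (exp \<zeta> - 1) ^ 2 = (a * cos y - 1)^2 + (a * sin y)^2"
    by (simp add: cmod_power2 Re_exp Im_exp a_def y_def)
  also have "\<dots> = a*a - 2 * (a * cos y) + 1 + a*a * (sin y ^ 2 + cos y ^ 2 - 1)" by algebra
  also have "\<dots> = a*a - 2 * (a * cos y) + 1" by simp
  also have "\<dots> < (5/2)^2"
  proof -
    have p2: "a * cos y > a * (1/2)" using a0 cy by (intro mult_strict_left_mono) auto
    have "a * a < a * (28/10)" using a0 a1 by (intro mult_strict_left_mono) auto
    then show ?thesis using p2 a1 by (simp add: power2_eq_square)
  qed
  finally show ?thesis by (rule power2_less_imp_less) auto
qed

lemma bnd_v:
  fixes \<zeta> :: complex assumes z: "norm \<zeta> < 1"
  shows "norm (1 + casinh \<zeta> - 1) < 5/2"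
proof -
  define s where "s = csqrt (1 + \<zeta>^2)"
  define w where "w = \<zeta> + s"
  have ss: "s^2 = 1 + \<zeta>^2" by (simp add: s_def)
  have prod: "w * (s - \<zeta>) = 1" using ss by (simp add: w_def algebra_simps power2_eq_square)
  have w0: "w \<noteq> 0" using prod by auto
  have sqrt2: "sqrt 2 < (142/100::real)"
  proof -
    have "sqrt 2 < sqrt ((142/100::real)^2)" by (subst real_sqrt_less_iff) (simp add: power2_eq_square)
    then show ?thesis by simp
  qed
  have n1z: "norm (1 + \<zeta>^2) < 2"
  proof -
    have "norm (1 + \<zeta>^2) \<le> 1 + norm \<zeta> ^ 2" using norm_triangle_ineq[of 1 "\<zeta>^2"] by (simp add: norm_power)
    also have "norm \<zeta> ^ 2 < 1" using z by (simp add: power_less_one_iff)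
    finally show ?thesis by simp
  qed
  have ns: "norm s < 142/100"
  proof -
    have "norm s = sqrt (norm (1 + \<zeta>^2))" by (simp add: s_def)
    also have "\<dots> < sqrt 2" using n1z by simp
    finally show ?thesis using sqrt2 by linarith
  qed
  have nw: "norm w < exp 1"
    using norm_triangle_ineq[of \<zeta> s] z ns e_bounds unfolding w_def by linarith
  have nw2: "norm (s - \<zeta>) < exp 1"
    using norm_triangle_ineq4[of s \<zeta>] z ns e_bounds by linarith
  have nwpos: "norm w > 0" using w0 by simp
  have "norm w * norm (s - \<zeta>) = 1" using prod by (metis norm_mult norm_one)
  then have nw3: "norm w > exp (-1)"
  proof -
    assume h: "norm w * norm (s - \<zeta>) = 1"
    have "1 < norm w * exp 1" using h nw2 nwpos
      by (metis mult_strict_left_mono)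
    then show ?thesis by (simp add: exp_minus field_simps)
  qed
  have lnb: "\<bar>ln (norm w)\<bar> < 1"
  proof -
    have "ln (norm w) < ln (exp 1)" using nw nwpos by (subst ln_less_cancel_iff) auto
    moreover have "ln (exp (-1)) < ln (norm w)" using nw3 nwpos by (subst ln_less_cancel_iff) auto
    ultimately show ?thesis by simp
  qed
  have Rew: "0 \<le> Re w"
  proof -
    have inv: "inverse w = s - \<zeta>" using prod w0 by (simp add: field_simps)
    have "Re w + Re (inverse w) = 2 * Re s" using inv by (simp add: w_def)
    moreover have "Re (inverse w) = Re w / ((Re w)^2 + (Im w)^2)" by (simp add: Re_divide add.commute)
    ultimately have "Re w * (1 + 1 / ((Re w)^2 + (Im w)^2)) = 2 * Re s" by (simp add: algebra_simps)
    moreover have "0 \<le> Re s" unfolding s_def by (rule Re_csqrt)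
    moreover have "0 < 1 + 1 / ((Re w)^2 + (Im w)^2)" by (simp add: add_pos_nonneg)
    ultimately show ?thesis by (metis zero_le_mult_iff mult_nonneg_nonneg not_less zero_le_numeral)
  qed
  have imb: "\<bar>Im (Ln w)\<bar> \<le> pi/2" using Re_Ln_pos_le[OF w0] Rew by simp
  have l1: "ln (norm w) ^ 2 < 1" using lnb by (simp add: abs_square_less_1)
  have l2: "Im (Ln w) ^ 2 \<le> (pi/2) ^ 2"
  proof -
    have "\<bar>Im (Ln w)\<bar> ^ 2 \<le> (pi/2) ^ 2" using imb by (intro power_mono) auto
    then show ?thesis by simp
  qed
  have l3: "(pi/2) ^ 2 < (2::real) ^ 2" using pi_half_less_two by (intro power_strict_mono) auto
  have "norm (Ln w) ^ 2 = Re (Ln w) ^ 2 + Im (Ln w) ^ 2" by (rule cmod_power2)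
  also have "Re (Ln w) = ln (norm w)" using w0 by simp
  finally have "norm (Ln w) ^ 2 < (5/2) ^ 2" using l1 l2 l3 by (simp add: power2_eq_square)
  then have "norm (Ln w) < 5/2" by (rule power2_less_imp_less) auto
  then show ?thesis by (simp add: casinh_def w_def s_def)
qed


lemma Rt_ok:
  fixes a1 a2 Rc Rt :: real
  assumes a2: "0 < a2" and Rc: "0 < Rc" and h: "exp 1 * Rc \<le> a1 - a2"
    and Rt: "Rt \<le> (exp 1 - 1) * Rc"
  shows "a2 < a1" "Rt \<le> (1 - exp (-1)) * a1"
proof -
  have "0 < exp 1 * Rc" using Rc by simp
  then show "a2 < a1" using h by linarith
  have ei: "exp (-1) * exp 1 = (1::real)" by (simp flip: exp_add)
  have pos: "0 < 1 - exp (-1::real)" by simp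
  have "(exp 1 - 1) * Rc = (1 - exp (-1)) * (exp 1 * Rc)" using ei by (simp add: algebra_simps)
  also have "\<dots> \<le> (1 - exp (-1)) * a1" using h a2 pos by (intro mult_left_mono) auto
  finally show "Rt \<le> (1 - exp (-1)) * a1" using Rt by linarith
qed

theorem corollary4p11:
  fixes a1 a2 :: real and f :: "complex \<Rightarrow> complex"
  assumes "a1 > 0" and "a2 > 0"
    and "f \<in> class_A"
    and "\<forall>z. 0 < norm z \<and> norm z < 1 \<longrightarrow> f z \<noteq> 0"
    and "(subord (Yf a1 a2 f) (\<lambda>z. 2 / (1 + exp (- z))) \<and> a1 - a2 \<ge> exp 1 * r0)
       \<or> (subord (Yf a1 a2 f) (\<lambda>z. z + csqrt (1 + z^2)) \<and> a1 - a2 \<ge> sqrt 2 * exp 1)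
       \<or> (subord (Yf a1 a2 f) (\<lambda>z. 1 + sin z) \<and> a1 - a2 \<ge> exp 1 * sinh 1)
       \<or> (subord (Yf a1 a2 f) (\<lambda>z. 1 + z * exp z) \<and> a1 - a2 \<ge> (exp 1)^2)
       \<or> (subord (Yf a1 a2 f) (\<lambda>z. 1 + casinh z) \<and> 2 * (a1 - a2) \<ge> pi * exp 1)
       \<or> (subord (Yf a1 a2 f) exp \<and> a1 - a2 \<ge> exp 1 * (exp 1 - 1))"
  shows "f \<in> starlike_exp"
proof -
  note fA = assms(3) and nz = assms(4) and a2 = assms(2)
  have eb: "2718/1000 < exp (1::real)" "exp (1::real) < 27183/10000" by (rule e_bounds)+
  have em: "exp (-1::real) < 37/100"
  proof -
    have "exp (-1::real) = inverse (exp 1)" by (simp add: exp_minus)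
    moreover have "inverse (exp (1::real)) < 37/100" using eb by (simp add: field_simps)
    ultimately show ?thesis by simp
  qed
  show ?thesis
    using assms(5)
  proof (elim disjE conjE)
    assume s: "subord (Yf a1 a2 f) (\<lambda>z. 2 / (1 + exp (- z)))" and h: "exp 1 * r0 \<le> a1 - a2"
    have r: "r0 \<ge> 1/2" by (rule r0_ge)
    have "(exp (1::real) - 1) * (1/2) \<le> (exp 1 - 1) * r0" using r eb by (intro mult_left_mono) auto
    moreover have "4/5 \<le> (exp 1 - 1) * (1/2::real)" using eb by (simp add: field_simps)
    ultimately have Rt: "4/5 \<le> (exp 1 - 1) * r0" by linarith
    note ok = Rt_ok[OF a2 _ h Rt]
    show ?thesis
      by (rule core[OF fA nz a2 ok(1) s bnd_i _ ok(2)]) (use r in auto)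
  next
    assume s: "subord (Yf a1 a2 f) (\<lambda>z. z + csqrt (1 + z^2))" and h: "sqrt 2 * exp 1 \<le> a1 - a2"
    have h': "exp 1 * sqrt 2 \<le> a1 - a2" using h by (simp add: mult.commute)
    have sq: "sqrt 2 \<ge> (14/10::real)"
    proof -
      have "sqrt ((14/10::real)^2) \<le> sqrt 2" by (subst real_sqrt_le_iff) (simp add: power2_eq_square)
      then show ?thesis by simp
    qed
    have "(exp 1 - 1) * (14/10) \<le> (exp (1::real) - 1) * sqrt 2" using sq eb by (intro mult_left_mono) auto
    moreover have "2 \<le> (exp 1 - 1) * (14/10::real)" using eb by (simp add: field_simps)
    ultimately have Rt: "2 \<le> (exp (1::real) - 1) * sqrt 2" by linarith
    note ok = Rt_ok[OF a2 _ h' Rt]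
    show ?thesis
      by (rule core[OF fA nz a2 ok(1) s bnd_ii _ ok(2)]) auto
  next
    assume s: "subord (Yf a1 a2 f) (\<lambda>z. 1 + sin z)" and h: "exp 1 * sinh 1 \<le> a1 - a2"
    have sh: "2 * sinh (1::real) = exp 1 - exp (-1)" by (simp add: sinh_def)
    have sh1: "sinh (1::real) \<ge> 1174/1000" using sh eb em by linarith
    have "(exp 1 - 1) * (1174/1000) \<le> (exp 1 - 1) * sinh (1::real)" using sh1 eb by (intro mult_left_mono) auto
    moreover have "8/5 \<le> (exp 1 - 1) * (1174/1000::real)" using eb by (simp add: field_simps)
    ultimately have Rt: "8/5 \<le> (exp 1 - 1) * sinh (1::real)" by linarith
    note ok = Rt_ok[OF a2 _ h Rt]
    show ?thesis
      by (rule core[OF fA nz a2 ok(1) s bnd_iii _ ok(2)]) (use sh1 in auto)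
  next
    assume s: "subord (Yf a1 a2 f) (\<lambda>z. 1 + z * exp z)" and h: "(exp 1)^2 \<le> a1 - a2"
    have h': "exp 1 * exp 1 \<le> a1 - a2" using h by (simp add: power2_eq_square)
    have "1 * exp 1 \<le> (exp 1 - 1) * exp (1::real)" using eb by (intro mult_right_mono) auto
    then have Rt: "exp 1 \<le> (exp 1 - 1) * exp (1::real)" by simp
    note ok = Rt_ok[OF a2 _ h' Rt]
    show ?thesis
      by (rule core[OF fA nz a2 ok(1) s bnd_iv _ ok(2)]) auto
  next
    assume s: "subord (Yf a1 a2 f) (\<lambda>z. 1 + casinh z)" and h: "pi * exp 1 \<le> 2 * (a1 - a2)"
    have h': "exp 1 * (pi/2) \<le> a1 - a2" using h by (simp add: field_simps)
    have "(exp (1::real) - 1) * (3/2) \<le> (exp 1 - 1) * (pi/2)" using pi_gt3 eb by (intro mult_left_mono) auto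
    moreover have "5/2 \<le> (exp 1 - 1) * (3/2::real)" using eb by (simp add: field_simps)
    ultimately have Rt: "5/2 \<le> (exp (1::real) - 1) * (pi/2)" by linarith
    note ok = Rt_ok[OF a2 _ h' Rt]
    show ?thesis
      by (rule core[OF fA nz a2 ok(1) s bnd_v _ ok(2)]) auto
  next
    assume s: "subord (Yf a1 a2 f) exp" and h: "exp 1 * (exp 1 - 1) \<le> a1 - a2"
    have "(exp 1 - 1) * (17/10) \<le> (exp 1 - 1) * (exp 1 - 1::real)" using eb by (intro mult_left_mono) auto
    moreover have "5/2 \<le> (exp 1 - 1) * (17/10::real)" using eb by (simp add: field_simps)
    ultimately have Rt: "5/2 \<le> (exp 1 - 1) * (exp 1 - 1::real)" by linarith
    have b: "norm (exp \<zeta> - 1) < 5/2" if "norm \<zeta> < 1" for \<zeta> :: complex by (rule bnd_vi[OF that])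
    note ok = Rt_ok[OF a2 _ h Rt]
    show ?thesis
      by (rule core[OF fA nz a2 ok(1) s b _ ok(2)]) (use eb in auto)
  qed
qed

end
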